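(* Let $V$ be a finite set of variables, $\mathcal C$ a set of betweenness constraints over $V$, and $\kappa\ge 0$ an integer. Apply the following reduction rule as long as possible: if $\mathcal C$ contains a complete triple of constraints, delete these three constraints from $\mathcal C$ and delete from $V$ every variable that appears only in constraints of that triple. Let $(V',\mathcal C')$ be the resulting instance. Then $(V,\mathcal C)$ (with parameter $\kappa$) is a Yes-instance of Betweenness Above Tight Lower Bound if and only if $(V',\mathcal C')$ (with parameter $\kappa$) is a Yes-instance.
   Context: A betweenness constraint over $V$ is written $(v_i,\{v_j,v_k\})$ with $v_i,v_j,v_k\in V$ distinct, meaning "$v_i$ is between $v_j$ and $v_k$". A bijection $\alpha:V\to\{1,\dots,|V|\}$ (a linear arrangement) satisfies $(v_i,\{v_j,v_k\})$ if $\alpha(v_j)<\alpha(v_i)<\alpha(v_k)$ or $\alpha(v_k)<\alpha(v_i)<\alpha(v_j)$. For a constraint $C$, $vars(C)$ is its set of three variables. Three distinct constraints $A,B,C\in\mathcal C$ form a complete triple if $vars(A)=vars(B)=vars(C)$. Betweenness Above Tight Lower Bound (BATLB): given $V$, $\mathcal C$ and integer $\kappa\ge0$, the instance is a Yes-instance iff there is a bijection $\alpha:V\to\{1,\dots,|V|\}$ satisfying at least $|\mathcal C|/3+\kappa$ constraints of $\mathcal C$. *)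

theory Defs
  imports Complex_Main
begin

text \<open>A betweenness constraint (v_i, {v_j, v_k}) is represented as a pair (v_i, {v_j, v_k}).\<close>
type_synonym 'a betw = "'a \<times> 'a set"

definition is_constraint :: "'a set \<Rightarrow> 'a betw \<Rightarrow> bool" where
  "is_constraint V c \<longleftrightarrow> (\<exists>j k. snd c = {j, k} \<and> fst c \<noteq> j \<and> fst c \<noteq> k \<and> j \<noteq> k
                               \<and> fst c \<in> V \<and> j \<in> V \<and> k \<in> V)"

definition cvars :: "'a betw \<Rightarrow> 'a set" where
  "cvars c = insert (fst c) (snd c)"

definition satisfies :: "('a \<Rightarrow> nat) \<Rightarrow> 'a betw \<Rightarrow> bool" where
  "satisfies \<alpha> c \<longleftrightarrow> (\<exists>j k. snd c = {j, k} \<and>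
      ((\<alpha> j < \<alpha> (fst c) \<and> \<alpha> (fst c) < \<alpha> k) \<or> (\<alpha> k < \<alpha> (fst c) \<and> \<alpha> (fst c) < \<alpha> j)))"

definition batlb_yes :: "'a set \<Rightarrow> 'a betw set \<Rightarrow> int \<Rightarrow> bool" where
  "batlb_yes V C \<kappa> \<longleftrightarrow> (\<exists>\<alpha>. bij_betw \<alpha> V {1..card V} \<and>
      real (card {c \<in> C. satisfies \<alpha> c}) \<ge> real (card C) / 3 + real_of_int \<kappa>)"

definition complete_triple :: "'a betw set \<Rightarrow> 'a betw \<Rightarrow> 'a betw \<Rightarrow> 'a betw \<Rightarrow> bool" where
  "complete_triple C A B D \<longleftrightarrow> A \<in> C \<and> B \<in> C \<and> D \<in> C \<and> A \<noteq> B \<and> A \<noteq> D \<and> B \<noteq> D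
      \<and> cvars A = cvars B \<and> cvars B = cvars D"

definition reduce_step :: "('a set \<times> 'a betw set) \<Rightarrow> ('a set \<times> 'a betw set) \<Rightarrow> bool" where
  "reduce_step I J \<longleftrightarrow> (\<exists>A B D. complete_triple (snd I) A B D \<and>
      J = (fst I - {v \<in> cvars A. \<forall>c \<in> snd I - {A, B, D}. v \<notin> cvars c},
           snd I - {A, B, D}))"

end

theory Submission
  imports Defs
begin

lemma sat_iff: "satisfies \<alpha> (a, {b,c}) \<longleftrightarrow> (\<alpha> b < \<alpha> a \<and> \<alpha> a < \<alpha> c) \<or> (\<alpha> c < \<alpha> a \<and> \<alpha> a < \<alpha> b)"
  by (auto simp: satisfies_def doubleton_eq_iff)

lemma filt3: "P x \<Longrightarrow> \<not> P y \<Longrightarrow> \<not> P z \<Longrightarrow> card {w \<in> {x,y,z}. P w} = 1"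
proof -
  assume "P x" "\<not> P y" "\<not> P z"
  then have "{w \<in> {x,y,z}. P w} = {x}" by auto
  then show ?thesis by simp
qed

lemma triple_card:
  assumes "\<alpha> a \<noteq> \<alpha> b" "\<alpha> a \<noteq> \<alpha> c" "\<alpha> b \<noteq> \<alpha> c"
  shows "card {x \<in> {(a,{b,c}),(b,{a,c}),(c,{a,b})}. satisfies \<alpha> x} = 1"
proof -
  let ?A = "(a,{b,c})" and ?B = "(b,{a,c})" and ?D = "(c,{a,b})"
  have perm: "{?A,?B,?D} = {?B,?A,?D}" "{?A,?B,?D} = {?D,?A,?B}" by auto
  have m: "\<alpha> b < \<alpha> a \<and> \<alpha> a < \<alpha> c \<or> \<alpha> c < \<alpha> a \<and> \<alpha> a < \<alpha> b
     \<or> \<alpha> a < \<alpha> b \<and> \<alpha> b < \<alpha> c \<or> \<alpha> c < \<alpha> b \<and> \<alpha> b < \<alpha> a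
     \<or> \<alpha> a < \<alpha> c \<and> \<alpha> c < \<alpha> b \<or> \<alpha> b < \<alpha> c \<and> \<alpha> c < \<alpha> a"
    using assms by linarith
  show ?thesis
  proof (cases "satisfies \<alpha> ?A")
    case True
    then have "\<not> satisfies \<alpha> ?B" "\<not> satisfies \<alpha> ?D" by (auto simp: sat_iff)
    then show ?thesis using True filt3 by metis
  next
    case nA: False
    show ?thesis
    proof (cases "satisfies \<alpha> ?B")
      case True
      then have "\<not> satisfies \<alpha> ?D" by (auto simp: sat_iff)
      then show ?thesis using True nA filt3[of "satisfies \<alpha>" ?B ?A ?D] perm by metis
    next
      case False
      then have "satisfies \<alpha> ?D" using nA m by (auto simp: sat_iff insert_commute)
      then show ?thesis using False nA filt3[of "satisfies \<alpha>" ?D ?A ?B] perm by metis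
    qed
  qed
qed

lemma constr_shape:
  assumes "is_constraint V X" "cvars X = {a,b,c}" "a \<noteq> b" "a \<noteq> c" "b \<noteq> c"
  shows "X = (a,{b,c}) \<or> X = (b,{a,c}) \<or> X = (c,{a,b})"
proof -
  obtain x y z where X: "X = (x,{y,z})" "x \<noteq> y" "x \<noteq> z" "y \<noteq> z"
    using assms(1) unfolding is_constraint_def by (metis prod.collapse)
  have e: "insert x {y,z} = {a,b,c}" using assms(2) X by (simp add: cvars_def)
  have "x = a \<or> x = b \<or> x = c" using e by blast
  moreover have "{y,z} = {a,b,c} - {x}" using e X by auto
  ultimately show ?thesis using X assms by (auto simp: insert_Diff_if)
qed

lemma triple_shape:
  assumes "complete_triple C A B D" "\<forall>c\<in>C. is_constraint V c"
  shows "\<exists>a b c. a \<noteq> b \<and> a \<noteq> c \<and> b \<noteq> c \<and> a \<in> V \<and> b \<in> V \<and> c \<in> V \<and>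
     {A,B,D} = {(a,{b,c}),(b,{a,c}),(c,{a,b})} \<and> cvars A = {a,b,c}"
proof -
  have cA: "is_constraint V A" "is_constraint V B" "is_constraint V D"
    using assms unfolding complete_triple_def by auto
  obtain a b c where A: "A = (a,{b,c})" "a \<noteq> b" "a \<noteq> c" "b \<noteq> c" "a \<in> V" "b \<in> V" "c \<in> V"
    using cA(1) unfolding is_constraint_def by (metis prod.collapse)
  have cv: "cvars A = {a,b,c}" using A by (simp add: cvars_def)
  have "cvars B = {a,b,c}" "cvars D = {a,b,c}" using assms(1) cv unfolding complete_triple_def by auto
  then have hB: "B = (a,{b,c}) \<or> B = (b,{a,c}) \<or> B = (c,{a,b})"
    and hD: "D = (a,{b,c}) \<or> D = (b,{a,c}) \<or> D = (c,{a,b})"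
    using constr_shape[OF cA(2)] constr_shape[OF cA(3)] A(2-4) by blast+
  have ne: "A \<noteq> B" "A \<noteq> D" "B \<noteq> D" using assms(1) unfolding complete_triple_def by auto
  have "{A,B,D} = {(a,{b,c}),(b,{a,c}),(c,{a,b})}"
  proof (cases "B = (b,{a,c})")
    case True
    then have "D = (c,{a,b})" using hD ne A(1) by metis
    then show ?thesis using True A(1) by simp
  next
    case False
    then have "B = (c,{a,b})" using hB ne A(1) by metis
    moreover then have "D = (b,{a,c})" using hD ne A(1) by metis
    ultimately show ?thesis using A(1) by (simp add: insert_commute)
  qed
  then show ?thesis using A cv by blast
qed

lemma sat_cong:
  assumes "\<forall>x\<in>cvars c. \<forall>y\<in>cvars c. f x < f y \<longleftrightarrow> g x < g y"
  shows "satisfies f c \<longleftrightarrow> satisfies g c"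
proof -
  have "\<And>j k. snd c = {j,k} \<Longrightarrow> j \<in> cvars c \<and> k \<in> cvars c \<and> fst c \<in> cvars c"
    by (auto simp: cvars_def)
  then show ?thesis using assms unfolding satisfies_def by metis
qed

lemma yes_iff:
  assumes "finite V" "\<forall>c\<in>C. cvars c \<subseteq> V"
  shows "batlb_yes V C \<kappa> \<longleftrightarrow> (\<exists>\<alpha>. inj_on \<alpha> V \<and>
      real (card {c \<in> C. satisfies \<alpha> c}) \<ge> real (card C) / 3 + real_of_int \<kappa>)"
proof
  assume "batlb_yes V C \<kappa>" then show "\<exists>\<alpha>. inj_on \<alpha> V \<and>
      real (card {c \<in> C. satisfies \<alpha> c}) \<ge> real (card C) / 3 + real_of_int \<kappa>"
    unfolding batlb_yes_def bij_betw_def by blast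
next
  assume "\<exists>\<alpha>. inj_on \<alpha> V \<and>
      real (card {c \<in> C. satisfies \<alpha> c}) \<ge> real (card C) / 3 + real_of_int \<kappa>"
  then obtain \<alpha> where inj: "inj_on \<alpha> V" and ge: "real (card {c \<in> C. satisfies \<alpha> c}) \<ge> real (card C) / 3 + real_of_int \<kappa>"
    by blast
  define \<beta> where "\<beta> x = card {y\<in>V. \<alpha> y < \<alpha> x} + 1" for x
  have mono: "\<beta> x < \<beta> y" if "x \<in> V" "y \<in> V" "\<alpha> x < \<alpha> y" for x y
  proof -
    have "{z\<in>V. \<alpha> z < \<alpha> x} \<subset> {z\<in>V. \<alpha> z < \<alpha> y}" using that by auto
    then have "card {z\<in>V. \<alpha> z < \<alpha> x} < card {z\<in>V. \<alpha> z < \<alpha> y}"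
      by (rule psubset_card_mono[rotated]) (use assms(1) in auto)
    then show ?thesis by (simp add: \<beta>_def)
  qed
  have iff: "\<beta> x < \<beta> y \<longleftrightarrow> \<alpha> x < \<alpha> y" if "x \<in> V" "y \<in> V" for x y
  proof -
    have "\<alpha> x < \<alpha> y \<or> \<alpha> y < \<alpha> x \<or> x = y" using inj that by (metis inj_onD linorder_neqE_nat)
    then show ?thesis using mono that by fastforce
  qed
  have injb: "inj_on \<beta> V"
  proof (rule inj_onI)
    fix x y assume "x \<in> V" "y \<in> V" "\<beta> x = \<beta> y"
    then show "x = y" using iff inj by (metis inj_onD linorder_neqE_nat less_irrefl)
  qed
  have sub: "\<beta> ` V \<subseteq> {1..card V}"
  proof
    fix z assume "z \<in> \<beta> ` V"
    then obtain x where x: "x \<in> V" "z = \<beta> x" by blast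
    have "{y\<in>V. \<alpha> y < \<alpha> x} \<subset> V" using x by auto
    then have "card {y\<in>V. \<alpha> y < \<alpha> x} < card V" using assms(1) by (rule psubset_card_mono[rotated])
    then show "z \<in> {1..card V}" using x by (simp add: \<beta>_def)
  qed
  have "\<beta> ` V = {1..card V}"
    using sub by (rule card_subset_eq[rotated]) (use injb card_image in auto)
  then have bij: "bij_betw \<beta> V {1..card V}" using injb by (simp add: bij_betw_def)
  have "{c \<in> C. satisfies \<alpha> c} = {c \<in> C. satisfies \<beta> c}"
  proof -
    have "satisfies \<alpha> c \<longleftrightarrow> satisfies \<beta> c" if "c \<in> C" for c
      by (rule sat_cong) (use iff assms(2) that in blast)
    then show ?thesis by auto
  qed
  then show "batlb_yes V C \<kappa>" unfolding batlb_yes_def using bij ge by auto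
qed

lemma constr_cvars: "is_constraint V c \<Longrightarrow> cvars c \<subseteq> V"
  unfolding is_constraint_def cvars_def by (metis insert_subset empty_subsetI)

lemma constr_restrict:
  "is_constraint V x \<Longrightarrow> \<forall>v\<in>cvars x. v \<notin> R \<Longrightarrow> is_constraint (V - R) x"
proof -
  assume a1: "is_constraint V x" and a2: "\<forall>v\<in>cvars x. v \<notin> R"
  obtain j k where jk: "snd x = {j, k}" "fst x \<noteq> j" "fst x \<noteq> k" "j \<noteq> k"
     "fst x \<in> V" "j \<in> V" "k \<in> V" using a1 unfolding is_constraint_def by blast
  have "fst x \<notin> R" "j \<notin> R" "k \<notin> R" using a2 jk(1) by (auto simp: cvars_def)
  then show ?thesis unfolding is_constraint_def using jk by blast
qed

lemma finite_C:
  assumes "finite V" "\<forall>c\<in>C. is_constraint V c"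
  shows "finite C"
proof -
  have "C \<subseteq> V \<times> Pow V"
  proof
    fix x assume "x \<in> C"
    then have "cvars x \<subseteq> V" using assms(2) constr_cvars by blast
    then have "fst x \<in> V" "snd x \<subseteq> V" by (auto simp: cvars_def)
    then show "x \<in> V \<times> Pow V" by (cases x) auto
  qed
  then show ?thesis using assms(1) by (meson finite_Pow_iff finite_SigmaI finite_subset)
qed

lemma extend_inj:
  assumes "finite V" "V' \<subseteq> V" "inj_on (\<alpha>'::'a \<Rightarrow> nat) V'"
  shows "\<exists>\<alpha>. inj_on \<alpha> V \<and> (\<forall>x\<in>V'. \<alpha> x = \<alpha>' x)"
proof -
  obtain g :: "'a \<Rightarrow> nat" and n where g: "inj_on g (V - V')"
    using finite_imp_inj_to_nat_seg[of "V - V'"] assms(1) by blast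
  define M where "M = Suc (Max (\<alpha>' ` V'))"
  have fin: "finite V'" using assms(1,2) finite_subset by blast
  have le: "\<alpha>' x < M" if "x \<in> V'" for x
  proof -
    have "\<alpha>' x \<le> Max (\<alpha>' ` V')" using that fin by (intro Max_ge) auto
    then show ?thesis by (simp add: M_def)
  qed
  define \<alpha> where "\<alpha> x = (if x \<in> V' then \<alpha>' x else M + g x)" for x
  have "inj_on \<alpha> V"
  proof (rule inj_onI)
    fix x y assume xy: "x \<in> V" "y \<in> V" "\<alpha> x = \<alpha> y"
    show "x = y"
    proof (cases "x \<in> V'")
      case True
      show ?thesis
      proof (cases "y \<in> V'")
        case True
        then show ?thesis using \<open>x \<in> V'\<close> xy assms(3) by (simp add: \<alpha>_def inj_on_def)
      next
        case False
        then show ?thesis using \<open>x \<in> V'\<close> xy le[of x] by (simp add: \<alpha>_def)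
      qed
    next
      case False
      show ?thesis
      proof (cases "y \<in> V'")
        case True
        then show ?thesis using \<open>x \<notin> V'\<close> xy le[of y] by (simp add: \<alpha>_def)
      next
        case False
        then show ?thesis using \<open>x \<notin> V'\<close> xy g by (simp add: \<alpha>_def inj_on_def)
      qed
    qed
  qed
  moreover have "\<forall>x\<in>V'. \<alpha> x = \<alpha>' x" by (simp add: \<alpha>_def)
  ultimately show ?thesis by blast
qed

lemma step_lemma:
  assumes fin: "finite V" and cons: "\<forall>c\<in>C. is_constraint V c" and st: "reduce_step (V, C) J"
  shows "finite (fst J) \<and> (\<forall>c\<in>snd J. is_constraint (fst J) c) \<and>
         (batlb_yes V C \<kappa> \<longleftrightarrow> batlb_yes (fst J) (snd J) \<kappa>)"
proof -
  obtain A B D where ct: "complete_triple C A B D"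
    and J: "J = (V - {v \<in> cvars A. \<forall>c \<in> C - {A, B, D}. v \<notin> cvars c}, C - {A, B, D})"
    using st unfolding reduce_step_def by auto
  define R where "R = {v \<in> cvars A. \<forall>c \<in> C - {A, B, D}. v \<notin> cvars c}"
  define T where "T = {A,B,D}"
  define V' where "V' = V - R"
  define C' where "C' = C - T"
  have J': "fst J = V'" "snd J = C'" using J by (simp_all add: V'_def R_def C'_def T_def)
  obtain a b c where abc: "a \<noteq> b" "a \<noteq> c" "b \<noteq> c" "a \<in> V" "b \<in> V" "c \<in> V"
     "T = {(a,{b,c}),(b,{a,c}),(c,{a,b})}"
    using triple_shape[OF ct cons] unfolding T_def by blast
  have finV': "finite V'" using fin by (simp add: V'_def)
  have consC': "\<forall>x\<in>C'. is_constraint V' x"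
  proof
    fix x assume x: "x \<in> C'"
    then have "\<forall>v\<in>cvars x. v \<notin> R" using x by (auto simp: R_def C'_def T_def)
    moreover have "is_constraint V x" using cons x by (auto simp: C'_def)
    ultimately show "is_constraint V' x" unfolding V'_def
      using constr_restrict by blast
  qed
  have finC: "finite C" using finite_C[OF fin cons] .
  have TC: "T \<subseteq> C" using ct by (auto simp: T_def complete_triple_def)
  have cardT: "card T = 3" using ct by (auto simp: T_def complete_triple_def)
  have cardC: "card C = card C' + 3"
    using card_Diff_subset[OF finite_subset[OF TC finC] TC] card_mono[OF finC TC] cardT
    by (simp add: C'_def)
  have count: "card {x \<in> C. satisfies \<alpha> x} = card {x \<in> C'. satisfies \<alpha> x} + 1"
    if "\<alpha> a \<noteq> \<alpha> b" "\<alpha> a \<noteq> \<alpha> c" "\<alpha> b \<noteq> \<alpha> c" for \<alpha>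
  proof -
    have "{x \<in> C. satisfies \<alpha> x} = {x \<in> C'. satisfies \<alpha> x} \<union> {x \<in> T. satisfies \<alpha> x}"
      using TC by (auto simp: C'_def)
    moreover have "{x \<in> C'. satisfies \<alpha> x} \<inter> {x \<in> T. satisfies \<alpha> x} = {}"
      by (auto simp: C'_def)
    moreover have "finite {x \<in> C'. satisfies \<alpha> x}" "finite {x \<in> T. satisfies \<alpha> x}"
      using finC TC by (auto simp: C'_def intro: finite_subset)
    moreover have "card {x \<in> T. satisfies \<alpha> x} = 1"
      using triple_card[of \<alpha> a b c] that abc(7) by simp
    ultimately show ?thesis by (simp add: card_Un_disjoint)
  qed
  have ineq: "(real (card {x \<in> C. satisfies \<alpha> x}) \<ge> real (card C) / 3 + real_of_int \<kappa>)
     \<longleftrightarrow> (real (card {x \<in> C'. satisfies \<alpha> x}) \<ge> real (card C') / 3 + real_of_int \<kappa>)"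
    if "\<alpha> a \<noteq> \<alpha> b" "\<alpha> a \<noteq> \<alpha> c" "\<alpha> b \<noteq> \<alpha> c" for \<alpha>
    using count[OF that] cardC by (simp add: field_simps)
  have cv: "\<forall>x\<in>C. cvars x \<subseteq> V" using cons constr_cvars by blast
  have cv': "\<forall>x\<in>C'. cvars x \<subseteq> V'" using consC' constr_cvars by blast
  have V'V: "V' \<subseteq> V" by (auto simp: V'_def)
  have "batlb_yes V C \<kappa> \<longleftrightarrow> batlb_yes V' C' \<kappa>"
  proof
    assume "batlb_yes V C \<kappa>"
    then obtain \<alpha> where inj: "inj_on \<alpha> V" and
      ge: "real (card {x \<in> C. satisfies \<alpha> x}) \<ge> real (card C) / 3 + real_of_int \<kappa>"
      using yes_iff[OF fin cv] by blast
    have d: "\<alpha> a \<noteq> \<alpha> b" "\<alpha> a \<noteq> \<alpha> c" "\<alpha> b \<noteq> \<alpha> c" using inj abc by (meson inj_onD)+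
    show "batlb_yes V' C' \<kappa>"
      using yes_iff[OF finV' cv'] inj_on_subset[OF inj V'V] ineq[OF d] ge by blast
  next
    assume "batlb_yes V' C' \<kappa>"
    then obtain \<alpha>' where inj: "inj_on \<alpha>' V'" and
      ge: "real (card {x \<in> C'. satisfies \<alpha>' x}) \<ge> real (card C') / 3 + real_of_int \<kappa>"
      using yes_iff[OF finV' cv'] by blast
    obtain \<alpha> where inj2: "inj_on \<alpha> V" and agr: "\<forall>x\<in>V'. \<alpha> x = \<alpha>' x"
      using extend_inj[OF fin V'V inj] by blast
    have "{x \<in> C'. satisfies \<alpha>' x} = {x \<in> C'. satisfies \<alpha> x}"
    proof -
      have "satisfies \<alpha>' x \<longleftrightarrow> satisfies \<alpha> x" if "x \<in> C'" for x
      proof (rule sat_cong)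
        have "cvars x \<subseteq> V'" using cv' that by blast
        then show "\<forall>u\<in>cvars x. \<forall>w\<in>cvars x. (\<alpha>' u < \<alpha>' w) = (\<alpha> u < \<alpha> w)"
          using agr by (metis subsetD)
      qed
      then show ?thesis by auto
    qed
    moreover have d: "\<alpha> a \<noteq> \<alpha> b" "\<alpha> a \<noteq> \<alpha> c" "\<alpha> b \<noteq> \<alpha> c" using inj2 abc by (meson inj_onD)+
    ultimately show "batlb_yes V C \<kappa>"
      using yes_iff[OF fin cv] inj2 ineq[OF d] ge by auto
  qed
  then show ?thesis using J' finV' consC' by simp
qed

theorem lemma3:
  fixes V V' :: "'a set" and C C' :: "'a betw set" and \<kappa> :: int
  assumes "finite V"
    and "\<forall>c \<in> C. is_constraint V c"
    and "\<kappa> \<ge> 0"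
    and "reduce_step\<^sup>*\<^sup>* (V, C) (V', C')"
    and "\<not> (\<exists>A B D. complete_triple C' A B D)"
  shows "batlb_yes V C \<kappa> \<longleftrightarrow> batlb_yes V' C' \<kappa>"
proof -
  have "finite (fst p) \<and> (\<forall>c\<in>snd p. is_constraint (fst p) c) \<and>
         (batlb_yes V C \<kappa> \<longleftrightarrow> batlb_yes (fst p) (snd p) \<kappa>)"
    if "reduce_step\<^sup>*\<^sup>* (V, C) p" for p
    using that
  proof (induction rule: rtranclp_induct)
    case base
    then show ?case using assms(1,2) by simp
  next
    case (step y z)
    obtain V1 C1 where y: "y = (V1, C1)" by (cases y)
    have "finite (fst z) \<and> (\<forall>c\<in>snd z. is_constraint (fst z) c) \<and>
         (batlb_yes V1 C1 \<kappa> \<longleftrightarrow> batlb_yes (fst z) (snd z) \<kappa>)"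
      using step_lemma[of V1 C1 z \<kappa>] step y by simp
    then show ?case using step.IH y by simp
  qed
  from this[OF assms(4)] show ?thesis by simp
qed

end
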